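(* For each positive integer $n$, \[ 1 + \sum_{k=1}^{n} (-q)^k \left( \overline{{ n \brack k }}_{q,1} + \overline{{ n-1 \brack k-1 }}_{q,1} \right) = \sum_{ |j| \le \lfloor ( n+1 )/2 \rfloor } (-1)^j q^{j^2}. \]
   Context: An overpartition is a partition in which the last occurrence of each distinct part size may be overlined; its weight $|\lambda|$ is the sum of its parts. For integers $0\le k\le n$, $\overline{{n \brack k}}_{q,1}=\sum_{\lambda} q^{|\lambda|}$, the sum over all overpartitions $\lambda$ with largest part at most $n-k$ and at most $k$ parts. *)

theory Defs
  imports Main "HOL-Library.Multiset"
begin

text \<open>An overpartition is represented as a pair (P, S): P is the multiset of parts
(positive integers), O is the set of part sizes whose last occurrence is overlined
(so O is a subset of the distinct parts).\<close>

definition overpartitions_bounded :: "nat \<Rightarrow> nat \<Rightarrow> (nat multiset \<times> nat set) set" where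
  "overpartitions_bounded m k =
     {(P, S). set_mset P \<subseteq> {1..m} \<and> size P \<le> k \<and> S \<subseteq> set_mset P}"

definition over_qbinom :: "nat \<Rightarrow> nat \<Rightarrow> 'a::comm_ring_1 \<Rightarrow> 'a" where
  "over_qbinom n k q =
     (\<Sum>(P, S) \<in> overpartitions_bounded (n - k) k. q ^ (sum_mset P))"

end

theory Submission
  imports Defs
begin

fun bq :: "'a::comm_ring_1 \<Rightarrow> nat \<Rightarrow> nat \<Rightarrow> 'a" where
  "bq q 0 k = 1"
| "bq q (Suc m) 0 = 1"
| "bq q (Suc m) (Suc k) = bq q m (Suc k) + q^(Suc m) * (bq q (Suc m) k + bq q m k)"

lemma bq_0_right[simp]: "bq q m 0 = 1"
  by (cases m) auto

lemma R1_one: "bq q (Suc 0) (Suc k) = bq q (Suc 0) k + q^(Suc k) * (bq q 0 (Suc k) + bq q 0 k)"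
proof (induction k)
  case 0 then show ?case by simp
next
  case (Suc k)
  then show ?case by (simp add: algebra_simps)
qed

lemma alg_aux:
  fixes A Bm1 C E F G H I J x y q :: "'a::comm_ring_1"
  assumes "A = C + q*x*(Bm1+E)" "Bm1 = E + q*x*(F+G)" "C = E + q*y*(H+I)"
    "Bm1 = F + y*(E+G)" "C = H + x*(E+I)" "E = G + y*(I+J)" "E = I + x*(G+J)"
  shows "A = Bm1 + q*y*(C+E)"
proof -
  have "A - Bm1 - q*y*(C+E) = (C - E) + q*x*((Bm1 - F) - G + E) - q*y*(C+E)"
    using assms(1,2) by (simp add: algebra_simps)
  also have "... = q*y*(H+I) + q*x*(y*(E+G) - G + E) - q*y*(C+E)"
    using assms(3,4) by (simp add: algebra_simps)
  also have "... = q*y*(I - E) + q*x*y*(G - I) + q*x*(E - G)"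
    using assms(5) by (simp add: algebra_simps)
  also have "... = q*y*(-x*(G+J)) + q*x*y*(G - I) + q*x*(y*(I+J))"
  proof -
    have e1: "I - E = -x*(G+J)" using assms(7) by (simp add: algebra_simps)
    have e2: "E - G = y*(I+J)" using assms(6) by (simp add: algebra_simps)
    show ?thesis by (simp only: e1 e2)
  qed
  also have "... = 0" by (simp add: algebra_simps)
  finally have h: "A - Bm1 - q*y*(C+E) = 0" .
  have "A - (Bm1 + q*y*(C+E)) = 0" using h by (simp add: algebra_simps)
  then show ?thesis by simp
qed

lemma R1: "bq q (Suc m) (Suc k) = bq q (Suc m) k + q^(Suc k) * (bq q m (Suc k) + bq q m k)"
proof (induction m arbitrary: k)
  case 0 then show ?case using R1_one by simp
next
  case (Suc m')
  note O = Suc.IH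
  show ?case
  proof (induction k)
    case 0
    have h1: "bq q (Suc m') (Suc 0) = 1 + q * (bq q m' (Suc 0) + 1)"
      using O[of 0] by simp
    have h2: "bq q (Suc m') (Suc 0) = bq q m' (Suc 0) + 2 * q^(Suc m')"
      by simp
    have h3: "bq q (Suc (Suc m')) (Suc 0) = bq q (Suc m') (Suc 0) + 2 * q^(Suc (Suc m'))"
      by simp
    have h4: "q * bq q (Suc m') (Suc 0) = q * bq q m' (Suc 0) + 2 * q^(Suc (Suc m'))"
      using h2 by (simp add: algebra_simps)
    show ?case using h1 h3 h4 by (simp add: algebra_simps)
  next
    case (Suc k')
    have D1: "bq q (Suc m') (Suc (Suc k')) = bq q (Suc m') (Suc k') + q^(Suc (Suc k')) * (bq q m' (Suc (Suc k')) + bq q m' (Suc k'))"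
      using O[of "Suc k'"] .
    have D3: "bq q (Suc m') (Suc k') = bq q (Suc m') k' + q^(Suc k') * (bq q m' (Suc k') + bq q m' k')"
      using O[of k'] .
    note D2 = Suc.IH
    have "bq q (Suc (Suc m')) (Suc (Suc k')) = bq q (Suc (Suc m')) (Suc k') + q * q ^ Suc k' *
     (bq q (Suc m') (Suc (Suc k')) + bq q (Suc m') (Suc k'))"
    proof (rule alg_aux[where x="q^Suc m'" and y="q^Suc k'" and F="bq q (Suc (Suc m')) k'" and G="bq q (Suc m') k'"
        and H="bq q m' (Suc (Suc k'))" and I="bq q m' (Suc k')" and J="bq q m' k'"])
      show "bq q (Suc (Suc m')) (Suc (Suc k')) = bq q (Suc m') (Suc (Suc k')) + q * q ^ Suc m' * (bq q (Suc (Suc m')) (Suc k') + bq q (Suc m') (Suc k'))"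
        by (simp only: bq.simps(3)[of q "Suc m'" "Suc k'"] power_Suc mult.assoc)
      show "bq q (Suc (Suc m')) (Suc k') = bq q (Suc m') (Suc k') + q * q ^ Suc m' * (bq q (Suc (Suc m')) k' + bq q (Suc m') k')"
        by (simp only: bq.simps(3)[of q "Suc m'" "k'"] power_Suc mult.assoc)
      show "bq q (Suc m') (Suc (Suc k')) = bq q (Suc m') (Suc k') + q * q ^ Suc k' * (bq q m' (Suc (Suc k')) + bq q m' (Suc k'))"
        using D1 by (simp only: power_Suc mult.assoc)
      show "bq q (Suc (Suc m')) (Suc k') = bq q (Suc (Suc m')) k' + q ^ Suc k' * (bq q (Suc m') (Suc k') + bq q (Suc m') k')"
        using D2 .
      show "bq q (Suc m') (Suc (Suc k')) = bq q m' (Suc (Suc k')) + q ^ Suc m' * (bq q (Suc m') (Suc k') + bq q m' (Suc k'))"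
        by (simp only: bq.simps(3)[of q m' "Suc k'"])
      show "bq q (Suc m') (Suc k') = bq q (Suc m') k' + q ^ Suc k' * (bq q m' (Suc k') + bq q m' k')"
        using D3 .
      show "bq q (Suc m') (Suc k') = bq q m' (Suc k') + q ^ Suc m' * (bq q (Suc m') k' + bq q m' k')"
        by (simp only: bq.simps(3)[of q m' k'])
    qed
    then show ?case by simp
  qed
qed

declare bq.simps(3)[simp del]

definition bb :: "'a::comm_ring_1 \<Rightarrow> nat \<Rightarrow> nat \<Rightarrow> 'a" where
  "bb q m k = (case m of 0 \<Rightarrow> 0 | Suc m' \<Rightarrow> bq q m' k)"
definition bk :: "'a::comm_ring_1 \<Rightarrow> nat \<Rightarrow> nat \<Rightarrow> 'a" where
  "bk q m k = (case k of 0 \<Rightarrow> 0 | Suc k' \<Rightarrow> bq q m k')"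

lemma R1g: "bq q m (Suc k) = bq q m k + q^(Suc k) * (bb q m (Suc k) + bb q m k)"
  by (cases m) (simp_all add: bb_def R1)

lemma R2g: "bq q (Suc m) k = bq q m k + q^(Suc m) * (bk q (Suc m) k + bk q m k)"
  by (cases k) (simp_all add: bk_def bq.simps(3))

definition UU :: "'a::comm_ring_1 \<Rightarrow> nat \<Rightarrow> 'a" where
  "UU q N = (\<Sum>k\<le>N. (-1)^k * bq q (N-k) k)"
definition VV :: "'a::comm_ring_1 \<Rightarrow> nat \<Rightarrow> 'a" where
  "VV q N = (\<Sum>k\<le>N. (-q)^k * bq q (N-k) k)"

lemma UV_A: "UU q (Suc (Suc M)) + UU q (Suc M) = VV q (Suc M) - q * VV q M"
proof -
  have s1: "UU q (Suc (Suc M)) = 1 + (\<Sum>j\<le>Suc M. (-1)^(Suc j) * bq q (Suc M - j) (Suc j))"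
    unfolding UU_def by (subst sum.atMost_Suc_shift) simp
  have s2: "(\<Sum>j\<le>Suc M. (-1)^(Suc j) * bq q (Suc M - j) (Suc j))
     = - UU q (Suc M) + (\<Sum>j\<le>Suc M. (-q)^(Suc j) * bb q (Suc M - j) (Suc j))
       + (\<Sum>j\<le>Suc M. (-q)^(Suc j) * bb q (Suc M - j) j)"
    unfolding UU_def sum_negf[symmetric] sum.distrib[symmetric]
  proof (rule sum.cong)
    fix j
    show "(-1)^(Suc j) * bq q (Suc M - j) (Suc j) = - ((-1)^j * bq q (Suc M - j) j) +
       (-q)^(Suc j) * bb q (Suc M - j) (Suc j) + (-q)^(Suc j) * bb q (Suc M - j) j"
      unfolding R1g[of q "Suc M - j" j] power_minus[of q "Suc j"] by (simp add: algebra_simps)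
  qed simp
  have s3: "(\<Sum>j\<le>Suc M. (-q)^(Suc j) * bb q (Suc M - j) (Suc j)) = VV q (Suc M) - 1"
  proof -
    have "(\<Sum>j\<le>Suc M. (-q)^(Suc j) * bb q (Suc M - j) (Suc j)) = (\<Sum>j\<le>M. (-q)^(Suc j) * bq q (M - j) (Suc j))"
      by (subst sum.atMost_Suc) (auto simp: bb_def Suc_diff_le intro!: sum.cong)
    moreover have "VV q (Suc M) = 1 + (\<Sum>j\<le>M. (-q)^(Suc j) * bq q (M - j) (Suc j))"
      unfolding VV_def by (subst sum.atMost_Suc_shift) simp
    ultimately show ?thesis by simp
  qed
  have s4: "(\<Sum>j\<le>Suc M. (-q)^(Suc j) * bb q (Suc M - j) j) = - q * VV q M"
  proof -
    have "(\<Sum>j\<le>Suc M. (-q)^(Suc j) * bb q (Suc M - j) j) = (\<Sum>j\<le>M. (-q)^(Suc j) * bq q (M - j) j)"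
      by (subst sum.atMost_Suc) (auto simp: bb_def Suc_diff_le intro!: sum.cong)
    also have "... = - q * VV q M" unfolding VV_def sum_distrib_left
      by (rule sum.cong) (simp_all add: algebra_simps)
    finally show ?thesis .
  qed
  show ?thesis by (simp only: s1 s2 s3 s4) (simp add: algebra_simps)
qed

lemma pow_split: "k \<le> n \<Longrightarrow> (-q)^k * q^(n-k) = (-1)^k * (q::'a::comm_ring_1)^n"
proof -
  assume "k \<le> n"
  then have "q^n = q^k * q^(n-k)" by (metis le_add_diff_inverse power_add)
  then show ?thesis unfolding power_minus[of q k] by (simp add: algebra_simps)
qed

lemma UV_B: "VV q (Suc (Suc M)) = VV q (Suc M) - q^(Suc (Suc M)) * (UU q (Suc M) + UU q M)"
proof -
  have s1: "VV q (Suc (Suc M)) = (\<Sum>k\<le>Suc M. (-q)^k * bq q (Suc (Suc M) - k) k) + (-q)^(Suc (Suc M))"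
    unfolding VV_def by (subst sum.atMost_Suc) simp
  have s2: "(\<Sum>k\<le>Suc M. (-q)^k * bq q (Suc (Suc M) - k) k)
     = VV q (Suc M) + q^(Suc (Suc M)) * (\<Sum>k\<le>Suc M. (-1)^k * bk q (Suc (Suc M - k)) k)
       + q^(Suc (Suc M)) * (\<Sum>k\<le>Suc M. (-1)^k * bk q (Suc M - k) k)"
  proof -
    have "(\<Sum>k\<le>Suc M. (-q)^k * bq q (Suc (Suc M) - k) k) =
      (\<Sum>k\<le>Suc M. (-q)^k * bq q (Suc M - k) k + q^(Suc (Suc M)) * ((-1)^k * bk q (Suc (Suc M - k)) k)
        + q^(Suc (Suc M)) * ((-1)^k * bk q (Suc M - k) k))"
    proof (rule sum.cong)
      fix k assume "k \<in> {..Suc M}"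
      then have k: "k \<le> Suc M" by simp
      have e: "Suc (Suc M) - k = Suc (Suc M - k)" using k by simp
      have p: "(-q)^k * q^(Suc (Suc M - k)) = (-1)^k * q^(Suc (Suc M))"
        using pow_split[of k "Suc (Suc M)" q] k by (simp add: Suc_diff_le)
      show "(-q)^k * bq q (Suc (Suc M) - k) k = (-q)^k * bq q (Suc M - k) k + q^(Suc (Suc M)) * ((-1)^k * bk q (Suc (Suc M - k)) k)
        + q^(Suc (Suc M)) * ((-1)^k * bk q (Suc M - k) k)"
      proof -
        have "(-q)^k * bq q (Suc (Suc M) - k) k = (-q)^k * bq q (Suc M - k) k + ((-q)^k * q^(Suc (Suc M - k))) * (bk q (Suc (Suc M - k)) k + bk q (Suc M - k) k)"
          unfolding e R2g[of q "Suc M - k" k] by (simp add: algebra_simps)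
        then show ?thesis by (simp only: p) (simp add: algebra_simps)
      qed
    qed simp
    then show ?thesis by (simp only: VV_def sum.distrib sum_distrib_left)
  qed
  have s3: "(\<Sum>k\<le>Suc M. (-1)^k * bk q (Suc (Suc M - k)) k) = (-1)^(Suc M) - UU q (Suc M)"
  proof -
    have "(\<Sum>k\<le>Suc M. (-1)^k * bk q (Suc (Suc M - k)) k) = (\<Sum>j\<le>M. (-1)^(Suc j) * bq q (Suc M - j) j)"
      by (subst sum.atMost_Suc_shift) (auto simp: bk_def Suc_diff_le intro!: sum.cong)
    moreover have "UU q (Suc M) = (\<Sum>j\<le>M. (-1)^j * bq q (Suc M - j) j) + (-1)^(Suc M)"
      unfolding UU_def by (subst sum.atMost_Suc) simp
    ultimately show ?thesis by (simp add: sum_negf)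
  qed
  have s4: "(\<Sum>k\<le>Suc M. (-1)^k * bk q (Suc M - k) k) = - UU q M"
    unfolding UU_def
    by (subst sum.atMost_Suc_shift) (auto simp: bk_def Suc_diff_le sum_negf[symmetric] intro!: sum.cong)
  have "(-q)^(Suc (Suc M)) + q^(Suc (Suc M)) * (-1)^(Suc M) = (0::'a)"
    unfolding power_minus[of q "Suc (Suc M)"] by simp
  then show ?thesis unfolding s1 s2 s3 s4 by (simp add: algebra_simps)
qed


definition LL :: "'a::comm_ring_1 \<Rightarrow> nat \<Rightarrow> 'a" where
  "LL q n = UU q (Suc n) + UU q n"

fun th :: "'a::comm_ring_1 \<Rightarrow> nat \<Rightarrow> 'a" where
  "th q 0 = 1"
| "th q (Suc t) = th q t + 2 * (-1)^(Suc t) * q^((Suc t)^2)"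

lemma LL_Suc: "LL q (Suc M) = VV q (Suc M) - q * VV q M"
  unfolding LL_def using UV_A[of q M] by simp

lemma VV_SS: "VV q (Suc (Suc M)) = VV q (Suc M) - q^(Suc (Suc M)) * LL q M"
  unfolding LL_def using UV_B[of q M] by (simp add: algebra_simps)

lemma LL_rec: "LL q (Suc (Suc (Suc M))) = LL q (Suc (Suc M)) - q^(Suc (Suc (Suc M))) * (LL q (Suc M) - LL q M)"
proof -
  have a: "LL q (Suc (Suc (Suc M))) = VV q (Suc (Suc (Suc M))) - q * VV q (Suc (Suc M))" by (rule LL_Suc)
  have b: "LL q (Suc (Suc M)) = VV q (Suc (Suc M)) - q * VV q (Suc M)" by (rule LL_Suc)
  have c: "VV q (Suc (Suc (Suc M))) = VV q (Suc (Suc M)) - q^(Suc (Suc (Suc M))) * LL q (Suc M)" by (rule VV_SS)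
  have d: "VV q (Suc (Suc M)) = VV q (Suc M) - q^(Suc (Suc M)) * LL q M" by (rule VV_SS)
  have "LL q (Suc (Suc (Suc M))) - LL q (Suc (Suc M)) = 0 - q^(Suc (Suc (Suc M))) * LL q (Suc M) - q * (VV q (Suc (Suc M)) - VV q (Suc M))"
    unfolding a b c by (simp add: algebra_simps)
  also have "... = 0 - q^(Suc (Suc (Suc M))) * LL q (Suc M) + q^(Suc (Suc (Suc M))) * LL q M"
    unfolding d by (simp add: algebra_simps)
  finally show ?thesis by (simp add: algebra_simps)
qed

lemma UU0: "UU q 0 = 1" by (simp add: UU_def)
lemma UU1: "UU q (Suc 0) = 0" by (simp add: UU_def)
lemma VV0: "VV q 0 = 1" by (simp add: VV_def)
lemma VV1: "VV q (Suc 0) = 1 - q" by (simp add: VV_def)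

lemma LL0: "LL q 0 = 1" by (simp add: LL_def UU0 UU1)
lemma LL1: "LL q (Suc 0) = 1 - 2*q"
  using LL_Suc[of q 0] by (simp add: VV0 VV1)
lemma LL2: "LL q (Suc (Suc 0)) = 1 - 2*q"
proof -
  have "LL q (Suc (Suc 0)) = VV q (Suc (Suc 0)) - q * VV q (Suc 0)" using LL_Suc[of q "Suc 0"] by simp
  moreover have "VV q (Suc (Suc 0)) = VV q (Suc 0) - q * q * LL q 0" using VV_SS[of q 0] by simp
  ultimately show ?thesis by (simp add: VV1 LL0 algebra_simps)
qed

lemma LL_th: "LL q n = th q ((n+1) div 2)"
proof -
  have "LL q n = th q ((n+1) div 2) \<and> LL q (Suc n) = th q ((n+2) div 2) \<and> LL q (Suc (Suc n)) = th q ((n+3) div 2)"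
  proof (induction n)
    case 0
    have "th q (Suc 0) = 1 - 2*q" by simp
    moreover have "(0+1) div 2 = (0::nat)" "(0+2) div 2 = Suc 0" "(0+3) div 2 = Suc 0" by simp_all
    ultimately show ?case by (simp add: LL0 LL1 LL2)
  next
    case (Suc M)
    have r: "LL q (Suc (Suc (Suc M))) = th q ((Suc M + 3) div 2)"
    proof (cases "even M")
      case True
      then obtain s where s: "M = 2*s" by blast
      have e1: "(Suc M + 3) div 2 = Suc (Suc s)" "(M + 3) div 2 = Suc s" "(M+2) div 2 = Suc s" "(M+1) div 2 = s"
        using s by auto
      have pw: "q^((Suc (Suc s))^2) = q^(Suc (Suc (Suc M))) * q^((Suc s)^2)"
      proof -
        have "(Suc (Suc s))^2 = Suc (Suc (Suc M)) + (Suc s)^2" using s by (simp add: power2_eq_square)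
        then show ?thesis by (simp only: power_add)
      qed
      have h1: "LL q M = th q s" "LL q (Suc M) = th q (Suc s)" "LL q (Suc (Suc M)) = th q (Suc s)"
        using Suc.IH e1 by simp_all
      have d: "th q (Suc s) - th q s = 2*(-1)^(Suc s)*q^((Suc s)^2)" by simp
      have "LL q (Suc (Suc (Suc M))) = th q (Suc s) - q^(Suc (Suc (Suc M))) * (th q (Suc s) - th q s)"
        using LL_rec[of q M] h1 by simp
      also have "... = th q (Suc s) - q^(Suc (Suc (Suc M))) * (2*(-1)^(Suc s)*q^((Suc s)^2))"
        by (simp only: d)
      also have "... = th q (Suc (Suc s))"
        by (simp only: th.simps pw) (simp add: algebra_simps)
      finally show ?thesis using e1 by simp
    next
      case False
      then obtain s where s: "M = 2*s+1" using oddE by blast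
      have e1: "(Suc M + 3) div 2 = Suc (Suc s)" "(M + 3) div 2 = Suc (Suc s)" "(M+2) div 2 = Suc s" "(M+1) div 2 = Suc s"
        using s by auto
      show ?thesis using Suc.IH LL_rec[of q M] unfolding e1 by simp
    qed
    show ?case using Suc.IH r by (simp add: numeral_3_eq_3)
  qed
  then show ?thesis by simp
qed



lemma ob_mem: "(P,S) \<in> overpartitions_bounded m k \<longleftrightarrow> set_mset P \<subseteq> {1..m} \<and> size P \<le> k \<and> S \<subseteq> set_mset P"
  by (simp add: overpartitions_bounded_def)

lemma finite_ob: "finite (overpartitions_bounded m k)"
proof -
  have "overpartitions_bounded m k \<subseteq> (mset ` {xs. set xs \<subseteq> {1..m} \<and> length xs \<le> k}) \<times> Pow {1..m}"
  proof
    fix x assume "x \<in> overpartitions_bounded m k"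
    then obtain P S where x: "x = (P,S)" and h: "set_mset P \<subseteq> {1..m}" "size P \<le> k" "S \<subseteq> set_mset P"
      by (cases x) (auto simp: ob_mem)
    obtain xs where xs: "mset xs = P" using ex_mset by blast
    have "P \<in> mset ` {xs. set xs \<subseteq> {1..m} \<and> length xs \<le> k}"
      using xs h by (auto intro!: image_eqI[of _ _ xs])
    then show "x \<in> (mset ` {xs. set xs \<subseteq> {1..m} \<and> length xs \<le> k}) \<times> Pow {1..m}"
      using x h by auto
  qed
  moreover have "finite ((mset ` {xs. set xs \<subseteq> {1..m} \<and> length xs \<le> k}) \<times> Pow {1..m})"
    by (intro finite_cartesian_product finite_imageI finite_lists_length_le) auto
  ultimately show ?thesis by (rule finite_subset)
qed

definition GG :: "'a::comm_ring_1 \<Rightarrow> nat \<Rightarrow> nat \<Rightarrow> 'a" where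
  "GG q m k = (\<Sum>(P, S) \<in> overpartitions_bounded m k. q ^ (sum_mset P))"

lemma ob_0: "overpartitions_bounded 0 k = {({#}, {})}"
  by (auto simp: overpartitions_bounded_def)

lemma ob_k0: "overpartitions_bounded m 0 = {({#}, {})}"
  by (auto simp: overpartitions_bounded_def)

lemma GG_0: "GG q 0 k = 1" by (simp add: GG_def ob_0)
lemma GG_k0: "GG q m 0 = 1" by (simp add: GG_def ob_k0)


lemma ob_split:
  fixes a :: nat
  assumes a: "a = Suc m"
  shows "overpartitions_bounded a (Suc k) = overpartitions_bounded m (Suc k)
     \<union> (\<lambda>(P,S). (add_mset a P, insert a S)) ` overpartitions_bounded m k
     \<union> (\<lambda>(P,S). (add_mset a P, S)) ` overpartitions_bounded a k"
proof (rule set_eqI, rule iffI)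
  fix x assume x: "x \<in> overpartitions_bounded a (Suc k)"
  obtain P S where xe: "x = (P,S)" by (cases x)
  have h: "set_mset P \<subseteq> {1..a}" "size P \<le> Suc k" "S \<subseteq> set_mset P" using x xe by (auto simp: ob_mem)
  show "x \<in> overpartitions_bounded m (Suc k)
     \<union> (\<lambda>(P,S). (add_mset a P, insert a S)) ` overpartitions_bounded m k
     \<union> (\<lambda>(P,S). (add_mset a P, S)) ` overpartitions_bounded a k"
  proof (cases "a \<in># P")
    case False
    then have "set_mset P \<subseteq> {1..m}" using h(1) a by (auto simp: subset_iff) (metis atLeastAtMost_iff le_SucE)
    then show ?thesis using h xe by (simp add: ob_mem)
  next
    case True
    define P0 where "P0 = P - {#a#}"
    have P: "P = add_mset a P0" using True unfolding P0_def by simp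
    have sz: "size P0 \<le> k" using h(2) P by simp
    have sub0: "set_mset P0 \<subseteq> {1..a}" using h(1) P by simp
    show ?thesis
    proof (cases "a \<in> S \<and> a \<notin># P0")
      case True
      have "set_mset P0 \<subseteq> {1..m}"
        using sub0 True a by (auto simp: subset_iff) (metis atLeastAtMost_iff le_SucE)
      moreover have "S - {a} \<subseteq> set_mset P0" using h(3) P by auto
      ultimately have "(P0, S - {a}) \<in> overpartitions_bounded m k" using sz by (simp add: ob_mem)
      moreover have "x = (add_mset a P0, insert a (S - {a}))" using xe P True by auto
      ultimately show ?thesis by (auto intro!: image_eqI)
    next
      case False
      have "S \<subseteq> set_mset P0" using h(3) P False by auto
      then have "(P0, S) \<in> overpartitions_bounded a k" using sz sub0 by (simp add: ob_mem)
      moreover have "x = (add_mset a P0, S)" using xe P by auto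
      ultimately show ?thesis by (auto intro!: image_eqI)
    qed
  qed
next
  fix x assume "x \<in> overpartitions_bounded m (Suc k)
     \<union> (\<lambda>(P,S). (add_mset a P, insert a S)) ` overpartitions_bounded m k
     \<union> (\<lambda>(P,S). (add_mset a P, S)) ` overpartitions_bounded a k"
  then show "x \<in> overpartitions_bounded a (Suc k)"
  proof -
    obtain P S where xe: "x = (P,S)" by (cases x)
    show ?thesis using \<open>x \<in> _\<close> unfolding xe using a by (auto simp: ob_mem subset_iff le_Suc_eq)
  qed
qed

lemma GG_rec: "GG q (Suc m) (Suc k) = GG q m (Suc k) + q^(Suc m) * (GG q (Suc m) k + GG q m k)"
proof -
  define a where "a = Suc m"
  define fB where "fB = (\<lambda>(P::nat multiset,S::nat set). (add_mset a P, insert a S))"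
  define fC where "fC = (\<lambda>(P::nat multiset,S::nat set). (add_mset a P, S))"
  define g where "g = (\<lambda>(P::nat multiset, S::nat set). q ^ (sum_mset P))"
  have spl: "overpartitions_bounded a (Suc k) = overpartitions_bounded m (Suc k)
     \<union> fB ` overpartitions_bounded m k \<union> fC ` overpartitions_bounded a k"
    unfolding fB_def fC_def by (rule ob_split) (simp add: a_def)
  have injB: "inj_on fB (overpartitions_bounded m k)"
  proof (rule inj_onI)
    fix x y assume x: "x \<in> overpartitions_bounded m k" and y: "y \<in> overpartitions_bounded m k" and e: "fB x = fB y"
    obtain P S where xe: "x = (P,S)" by (cases x)
    obtain P' S' where ye: "y = (P',S')" by (cases y)
    have "a \<notin> S" "a \<notin> S'" using x y xe ye by (auto simp: ob_mem a_def)
    then show "x = y" using e xe ye unfolding fB_def by (auto simp: insert_ident)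
  qed
  have injC: "inj_on fC (overpartitions_bounded a k)"
    by (rule inj_onI) (auto simp: fC_def)
  have d1: "overpartitions_bounded m (Suc k) \<inter> fB ` overpartitions_bounded m k = {}"
    by (auto simp: fB_def ob_mem a_def)
  have d2: "(overpartitions_bounded m (Suc k) \<union> fB ` overpartitions_bounded m k) \<inter> fC ` overpartitions_bounded a k = {}"
  proof -
    have "overpartitions_bounded m (Suc k) \<inter> fC ` overpartitions_bounded a k = {}"
      by (auto simp: fC_def ob_mem a_def)
    moreover have "fB ` overpartitions_bounded m k \<inter> fC ` overpartitions_bounded a k = {}"
    proof (rule ccontr)
      assume "fB ` overpartitions_bounded m k \<inter> fC ` overpartitions_bounded a k \<noteq> {}"
      then obtain z where z1: "z \<in> fB ` overpartitions_bounded m k" and z2: "z \<in> fC ` overpartitions_bounded a k" by blast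
      from z1 obtain x1 where x1: "x1 \<in> overpartitions_bounded m k" "z = fB x1" by blast
      from z2 obtain x2 where x2: "x2 \<in> overpartitions_bounded a k" "z = fC x2" by blast
      obtain P S where p1: "x1 = (P,S)" by (cases x1)
      obtain P' S' where p2: "x2 = (P',S')" by (cases x2)
      have 1: "(P,S) \<in> overpartitions_bounded m k" using x1 p1 by simp
      have 2: "(P',S') \<in> overpartitions_bounded a k" using x2 p2 by simp
      have e: "fB (P,S) = fC (P',S')" using x1 x2 p1 p2 by simp
      have "add_mset a P = add_mset a P'" "insert a S = S'" using e by (auto simp: fB_def fC_def)
      then have "P = P'" "a \<in> S'" by auto
      then have "a \<in># P" using 2 by (auto simp: ob_mem)
      then show False using 1 by (auto simp: ob_mem a_def)
    qed
    ultimately show ?thesis by blast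
  qed
  have fin: "finite (overpartitions_bounded m (Suc k))" "finite (fB ` overpartitions_bounded m k)"
    "finite (fC ` overpartitions_bounded a k)" by (simp_all add: finite_ob)
  have "GG q a (Suc k) = sum g (overpartitions_bounded a (Suc k))" by (simp add: GG_def g_def)
  also have "... = sum g (overpartitions_bounded m (Suc k)) + sum g (fB ` overpartitions_bounded m k)
      + sum g (fC ` overpartitions_bounded a k)"
    unfolding spl using fin d1 d2 by (simp add: sum.union_disjoint)
  also have "sum g (fB ` overpartitions_bounded m k) = sum (g \<circ> fB) (overpartitions_bounded m k)"
    using injB by (rule sum.reindex)
  also have "... = q^a * GG q m k" unfolding GG_def sum_distrib_left
    by (rule sum.cong) (auto simp: g_def fB_def power_add)
  also have "sum g (fC ` overpartitions_bounded a k) = sum (g \<circ> fC) (overpartitions_bounded a k)"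
    using injC by (rule sum.reindex)
  also have "... = q^a * GG q a k" unfolding GG_def sum_distrib_left
    by (rule sum.cong) (auto simp: g_def fC_def power_add)
  finally show ?thesis unfolding a_def by (simp add: GG_def g_def algebra_simps)
qed

lemma GG_bq: "GG q m k = bq q m k"
proof (induction m arbitrary: k)
  case 0 then show ?case by (simp add: GG_0)
next
  case (Suc m)
  note O = Suc.IH
  show ?case
  proof (induction k)
    case 0 then show ?case by (simp add: GG_k0)
  next
    case (Suc k)
    then show ?case using O by (simp add: GG_rec bq.simps(3))
  qed
qed


lemma oq: "over_qbinom n k q = bq q (n-k) k"
  by (simp add: over_qbinom_def GG_def[symmetric] GG_bq)

lemma theta_sum: "(\<Sum>j\<in>{-(int t)..int t}. (-1)^(nat \<bar>j\<bar>) * q^(nat (j^2))) = th (q::'a::comm_ring_1) t"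
proof (induction t)
  case 0 then show ?case by simp
next
  case (Suc t)
  have set: "{-(int (Suc t))..int (Suc t)} = insert (-(int t+1)) (insert (int t + 1) {-(int t)..int t})"
    by auto
  have n1: "nat \<bar>-(int t+1)\<bar> = Suc t" "nat \<bar>int t+1\<bar> = Suc t" by simp_all
  have n2a: "nat ((int t+1)^2) = (Suc t)^2"
  proof -
    have "(int t + 1)^2 = int ((Suc t)^2)" by simp
    then show ?thesis by (simp only: nat_int)
  qed
  have n2b: "nat ((- int t - 1)^2) = (Suc t)^2"
  proof -
    have "(- int t - 1)^2 = (int t + 1)^2" by (simp add: power2_eq_square algebra_simps)
    then show ?thesis using n2a by simp
  qed
  have n2: "nat ((-(int t+1))^2) = (Suc t)^2" "nat ((int t+1)^2) = (Suc t)^2"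
    using n2a n2b by simp_all
  show ?case unfolding set
    by (simp add: n1 n2 n2b Suc.IH nat_add_distrib del: of_nat_Suc)
qed

theorem corollary1p4:
  fixes n :: nat and q :: "'a::comm_ring_1"
  assumes "n \<ge> 1"
  shows "1 + (\<Sum>k=1..n. (-q)^k * (over_qbinom n k q + over_qbinom (n-1) (k-1) q))
       = (\<Sum>j\<in>{-(int ((n+1) div 2))..int ((n+1) div 2)}. (-1)^(nat \<bar>j\<bar>) * q^(nat (j^2)))"
proof -
  obtain p where np: "n = Suc p" using assms by (cases n) auto
  have "(\<Sum>k=1..n. (-q)^k * (over_qbinom n k q + over_qbinom (n-1) (k-1) q))
      = (\<Sum>j\<le>p. (-q)^(Suc j) * (over_qbinom n (Suc j) q + over_qbinom (n-1) j q))"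
    unfolding np using sum.shift_bounds_cl_Suc_ivl[of "\<lambda>k. (-q)^k * (over_qbinom (Suc p) k q + over_qbinom (Suc p - 1) (k-1) q)" 0 p]
    by (simp add: atLeast0AtMost)
  also have "... = (\<Sum>j\<le>p. (-1)^(Suc j) * bq q (Suc p - j) (Suc j) - (-1)^(Suc j) * bq q (Suc p - j) j)"
  proof (rule sum.cong)
    fix j assume "j \<in> {..p}"
    then have j: "j \<le> p" by simp
    have e: "Suc p - j = Suc (p - j)" using j by simp
    have r: "bq q (Suc (p-j)) (Suc j) - bq q (Suc (p-j)) j = q^(Suc j) * (bq q (p-j) (Suc j) + bq q (p-j) j)"
      using R1[of q "p-j" j] by simp
    show "(-q)^(Suc j) * (over_qbinom n (Suc j) q + over_qbinom (n-1) j q)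
       = (-1)^(Suc j) * bq q (Suc p - j) (Suc j) - (-1)^(Suc j) * bq q (Suc p - j) j"
      unfolding oq np e right_diff_distrib[symmetric] r power_minus[of q "Suc j"]
      by (simp add: algebra_simps)
  qed simp
  finally have lhs: "1 + (\<Sum>k=1..n. (-q)^k * (over_qbinom n k q + over_qbinom (n-1) (k-1) q))
      = 1 + (\<Sum>j\<le>p. (-1)^(Suc j) * bq q (Suc p - j) (Suc j)) + (\<Sum>j\<le>p. (-1)^j * bq q (Suc p - j) j)"
    by (simp add: sum_subtractf sum_negf)
  have u1: "UU q (Suc (Suc p)) = 1 + (\<Sum>j\<le>p. (-1)^(Suc j) * bq q (Suc p - j) (Suc j)) + (-1)^(Suc (Suc p))"
    unfolding UU_def by (subst sum.atMost_Suc_shift) (simp add: sum.atMost_Suc)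
  have u2: "UU q (Suc p) = (\<Sum>j\<le>p. (-1)^j * bq q (Suc p - j) j) + (-1)^(Suc p)"
    unfolding UU_def by (simp add: sum.atMost_Suc)
  have "1 + (\<Sum>k=1..n. (-q)^k * (over_qbinom n k q + over_qbinom (n-1) (k-1) q)) = LL q (Suc p)"
    unfolding lhs LL_def u1 u2 by (simp add: algebra_simps)
  also have "... = th q ((n+1) div 2)" unfolding LL_th np by simp
  also have "... = (\<Sum>j\<in>{-(int ((n+1) div 2))..int ((n+1) div 2)}. (-1)^(nat \<bar>j\<bar>) * q^(nat (j^2)))"
    by (rule theta_sum[symmetric])
  finally show ?thesis .
qed

end
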